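(* For a graph $G$, let $\widehat G$ denote its full suspension (cone), obtained by adding a new vertex adjacent to every vertex of $G$. Then: (a) for $n\ge 3$, $\widehat{C_n}$ is pseudo-Gorenstein$^{*}$ if and only if $n\equiv 0\pmod{12}$; (b) for $n\ge 1$, $\widehat{P_n}$ is pseudo-Gorenstein$^{*}$ if and only if $n\equiv 1,10\pmod{12}$.
   Context: $C_n$ is the cycle and $P_n$ the path on $n$ vertices. For a finite simple graph $G$ on vertex set $[N]$, let $S=K[x_1,\dots,x_N]$ ($K$ a field) and $I(G)$ the edge ideal generated by $x_ix_j$, $\{i,j\}\in E(G)$. Let $\alpha(G)$ be the independence number (equal to $\dim S/I(G)$). Write the Hilbert series of $S/I(G)$ uniquely as $(h_0+\dots+h_st^s)/(1-t)^{\alpha(G)}$ with $h_s\ne 0$, and $\mathfrak a(G)=s-\alpha(G)$. $G$ is pseudo-Gorenstein$^{*}$ if $h_s=1$ and $\mathfrak a(G)=0$. *)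

theory Defs
  imports "HOL-Computational_Algebra.Computational_Algebra"
begin

text \<open>A finite simple graph is given by a vertex set V and a set E of 2-element
  subsets of V (edges). Monomials in the variables x_v (v in V) are exponent
  functions m with support in V.\<close>

definition cycle_edges :: "nat \<Rightarrow> nat set set" where
  "cycle_edges n = {{i, (i + 1) mod n} | i. i < n}"

definition path_edges :: "nat \<Rightarrow> nat set set" where
  "path_edges n = {{i, Suc i} | i. Suc i < n}"

definition cone_edges :: "'a set \<Rightarrow> 'a set set \<Rightarrow> 'a \<Rightarrow> 'a set set" where
  "cone_edges V E v = E \<union> {{u, v} | u. u \<in> V}"

definition independent :: "'a set \<Rightarrow> 'a set set \<Rightarrow> 'a set \<Rightarrow> bool" where
  "independent V E F \<longleftrightarrow> F \<subseteq> V \<and> (\<forall>e\<in>E. \<not> e \<subseteq> F)"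

definition indep_number :: "'a set \<Rightarrow> 'a set set \<Rightarrow> nat" where
  "indep_number V E = Max (card ` {F. independent V E F})"

definition monomials_deg :: "'a set \<Rightarrow> nat \<Rightarrow> ('a \<Rightarrow> nat) set" where
  "monomials_deg V k = {m. (\<forall>x. x \<notin> V \<longrightarrow> m x = 0) \<and> (\<Sum>x\<in>V. m x) = k}"

text \<open>A monomial lies in the monomial ideal I(G) iff it is divisible by some
  edge monomial x_i x_j.\<close>
definition in_edge_ideal :: "'a set set \<Rightarrow> ('a \<Rightarrow> nat) \<Rightarrow> bool" where
  "in_edge_ideal E m \<longleftrightarrow> (\<exists>e\<in>E. \<forall>x\<in>e. 1 \<le> m x)"

text \<open>Hilbert function of S/I(G): the monomials not in I(G) form a K-basis of
  S/I(G) (standard monomials), independent of the field K.\<close>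
definition hilbert_fun :: "'a set \<Rightarrow> 'a set set \<Rightarrow> nat \<Rightarrow> nat" where
  "hilbert_fun V E k = card {m \<in> monomials_deg V k. \<not> in_edge_ideal E m}"

definition hilbert_series :: "'a set \<Rightarrow> 'a set set \<Rightarrow> int fps" where
  "hilbert_series V E = Abs_fps (\<lambda>k. int (hilbert_fun V E k))"

text \<open>pseudo-Gorenstein*: writing HS = h(t)/(1-t)^alpha with h polynomial
  (h is unique), h_s = 1 for s = deg h and a(G) = s - alpha = 0.\<close>
definition pseudo_gorenstein_star :: "'a set \<Rightarrow> 'a set set \<Rightarrow> bool" where
  "pseudo_gorenstein_star V E \<longleftrightarrow>
     (\<exists>h :: int poly. fps_of_poly h = hilbert_series V E * (1 - fps_X) ^ indep_number V E
        \<and> h \<noteq> 0 \<and> lead_coeff h = 1 \<and> int (degree h) - int (indep_number V E) = 0)"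

end

theory Submission
  imports Defs
begin

definition MS :: "'a set \<Rightarrow> nat \<Rightarrow> ('a \<Rightarrow> nat) set" where
  "MS F k = {m. (\<forall>x. x \<notin> F \<longrightarrow> m x = 0) \<and> (\<forall>x\<in>F. 1 \<le> m x) \<and> sum m F = k}"

lemma MS_finite:
  assumes "finite F" shows "finite (MS F k)"
proof -
  have "MS F k \<subseteq> {f. \<forall>x. (x \<in> F \<longrightarrow> f x \<in> {..k}) \<and> (x \<notin> F \<longrightarrow> f x = 0)}"
    using assms by (auto simp: MS_def intro: member_le_sum)
  moreover have "finite {f. \<forall>x. (x \<in> F \<longrightarrow> f x \<in> {..k}) \<and> (x \<notin> F \<longrightarrow> f x = (0::nat))}"
    using assms by (intro finite_set_of_finite_funs) auto
  ultimately show ?thesis by (rule finite_subset)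
qed

lemma MS_empty: "MS {} k = (if k = 0 then {\<lambda>_. 0} else {})"
  by (auto simp: MS_def)

lemma MS_insert0:
  assumes "finite F" "a \<notin> F" shows "MS (insert a F) 0 = {}"
  using assms by (auto simp: MS_def)

lemma MS_insert_Suc:
  assumes fin: "finite F" and a: "a \<notin> F"
  shows "card (MS (insert a F) (Suc k)) = card (MS (insert a F) k) + card (MS F k)"
proof -
  let ?M = "MS (insert a F) (Suc k)"
  define A where "A = {m\<in>?M. 2 \<le> m a}"
  define B where "B = {m\<in>?M. m a = 1}"
  have sumupd: "sum (m(a := v)) F = sum m F" for m :: "'a \<Rightarrow> nat" and v
    using a by (intro sum.cong) auto
  have sumupd2: "(\<Sum>x\<in>F. if x = a then v else m x) = sum m F" for m :: "'a \<Rightarrow> nat" and v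
    using a by (intro sum.cong) auto
  have MU: "?M = A \<union> B"
    by (auto simp: A_def B_def MS_def)
  have dis: "A \<inter> B = {}" by (auto simp: A_def B_def)
  have fA: "finite A" "finite B" using MS_finite[of "insert a F" "Suc k"] fin
    by (auto simp: A_def B_def)
  have "bij_betw (\<lambda>m. m(a := m a - 1)) A (MS (insert a F) k)"
  proof (rule bij_betwI[where g = "\<lambda>m. m(a := m a + 1)"])
    show "(\<lambda>m. m(a := m a - 1)) \<in> A \<rightarrow> MS (insert a F) k"
      using fin a by (auto simp: A_def MS_def sumupd sumupd2)
    show "(\<lambda>m. m(a := m a + 1)) \<in> MS (insert a F) k \<rightarrow> A"
      using fin a by (auto simp: A_def MS_def sumupd sumupd2)
  qed (auto simp: A_def MS_def)
  hence cA: "card A = card (MS (insert a F) k)" by (rule bij_betw_same_card)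
  have "bij_betw (\<lambda>m. m(a := 0)) B (MS F k)"
  proof (rule bij_betwI[where g = "\<lambda>m. m(a := 1)"])
    show "(\<lambda>m. m(a := 0)) \<in> B \<rightarrow> MS F k"
      using fin a by (auto simp: B_def MS_def sumupd sumupd2)
    show "(\<lambda>m. m(a := 1)) \<in> MS F k \<rightarrow> B"
      using fin a by (auto simp: B_def MS_def sumupd sumupd2)
  qed (auto simp: B_def MS_def a)
  hence cB: "card B = card (MS F k)" by (rule bij_betw_same_card)
  show ?thesis using MU dis fA cA cB by (simp add: card_Un_disjoint)
qed

definition gMS :: "'a set \<Rightarrow> int fps" where
  "gMS F = Abs_fps (\<lambda>k. int (card (MS F k)))"

lemma gMS_eq:
  assumes "finite F" shows "gMS F * (1 - fps_X) ^ card F = fps_X ^ card F"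
  using assms
proof (induction F rule: finite_induct)
  case empty
  show ?case by (auto simp: gMS_def MS_empty fps_eq_iff)
next
  case (insert a F)
  have "gMS (insert a F) = fps_X * gMS F + fps_X * gMS (insert a F)"
  proof (rule fps_ext)
    fix n show "gMS (insert a F) $ n = (fps_X * gMS F + fps_X * gMS (insert a F)) $ n"
      using insert.hyps by (cases n) (auto simp: gMS_def MS_insert0 MS_insert_Suc)
  qed
  hence "gMS (insert a F) * (1 - fps_X) = fps_X * gMS F"
    by (simp add: algebra_simps)
  hence "gMS (insert a F) * (1 - fps_X) ^ card (insert a F) = fps_X * (gMS F * (1 - fps_X) ^ card F)"
    using insert.hyps by (simp add: mult.assoc[symmetric] mult.commute[of fps_X])
  also have "\<dots> = fps_X ^ card (insert a F)" using insert by simp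
  finally show ?case .
qed

lemma indep_finite: "finite V \<Longrightarrow> finite {F. independent V E F}"
  by (rule finite_subset[of _ "Pow V"]) (auto simp: independent_def)

lemma hf_decomp:
  assumes fin: "finite V"
  shows "hilbert_fun V E k = (\<Sum>F\<in>{F. independent V E F}. card (MS F k))"
proof -
  let ?I = "{F. independent V E F}"
  have eq: "{m \<in> monomials_deg V k. \<not> in_edge_ideal E m} = (\<Union>F\<in>?I. MS F k)"
  proof (intro equalityI subsetI)
    fix m assume m: "m \<in> {m \<in> monomials_deg V k. \<not> in_edge_ideal E m}"
    define F where "F = {x\<in>V. 1 \<le> m x}"
    have z: "\<forall>x. x \<notin> V \<longrightarrow> m x = 0" and s: "sum m V = k" and ni: "\<not> in_edge_ideal E m"
      using m by (auto simp: monomials_deg_def)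
    have "independent V E F"
      using ni by (auto simp: independent_def F_def in_edge_ideal_def)
    moreover have "m \<in> MS F k"
    proof -
      have "sum m F = sum m V"
        using fin by (intro sum.mono_neutral_left) (auto simp: F_def)
      thus ?thesis using z s by (auto simp: MS_def F_def)
    qed
    ultimately show "m \<in> (\<Union>F\<in>?I. MS F k)" by blast
  next
    fix m assume "m \<in> (\<Union>F\<in>?I. MS F k)"
    then obtain F where F: "independent V E F" and m: "m \<in> MS F k" by blast
    have FV: "F \<subseteq> V" using F by (simp add: independent_def)
    have "sum m F = sum m V"
      using fin FV m by (intro sum.mono_neutral_left) (auto simp: MS_def)
    hence "m \<in> monomials_deg V k" using m FV by (auto simp: monomials_deg_def MS_def)
    moreover have "\<not> in_edge_ideal E m"
    proof
      assume "in_edge_ideal E m"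
      then obtain e where e: "e \<in> E" "\<forall>x\<in>e. 1 \<le> m x" by (auto simp: in_edge_ideal_def)
      have "e \<subseteq> F" using e m by (auto simp: MS_def) (metis Suc_n_not_le_n)
      thus False using F e by (auto simp: independent_def)
    qed
    ultimately show "m \<in> {m \<in> monomials_deg V k. \<not> in_edge_ideal E m}" by blast
  qed
  have "card (\<Union>F\<in>?I. MS F k) = (\<Sum>F\<in>?I. card (MS F k))"
  proof (rule card_UN_disjoint)
    show "finite ?I" using fin by (rule indep_finite)
    show "\<forall>F\<in>?I. finite (MS F k)"
      using fin by (auto simp: independent_def intro: MS_finite finite_subset)
    show "\<forall>F\<in>?I. \<forall>G\<in>?I. F \<noteq> G \<longrightarrow> MS F k \<inter> MS G k = {}"
    proof (intro ballI impI)
      fix F G :: "'a set" assume "F \<noteq> G"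
      show "MS F k \<inter> MS G k = {}"
      proof (rule ccontr)
        assume "MS F k \<inter> MS G k \<noteq> {}"
        then obtain m where "m \<in> MS F k" "m \<in> MS G k" by blast
        hence "F = {x. 1 \<le> m x}" "G = {x. 1 \<le> m x}" by (auto simp: MS_def)
        thus False using \<open>F \<noteq> G\<close> by simp
      qed
    qed
  qed
  thus ?thesis unfolding hilbert_fun_def eq .
qed

lemma hs_decomp:
  assumes "finite V"
  shows "hilbert_series V E = (\<Sum>F\<in>{F. independent V E F}. gMS F)"
  by (rule fps_ext) (simp add: hilbert_series_def hf_decomp[OF assms] fps_sum_nth gMS_def)

lemma pg_iff:
  assumes fin: "finite V"
  shows "pseudo_gorenstein_star V E \<longleftrightarrow>
     (\<Sum>F\<in>{F. independent V E F}. (-1::int) ^ (indep_number V E - card F)) = 1"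
proof -
  let ?I = "{F. independent V E F}"
  let ?a = "indep_number V E"
  define q :: "int poly" where "q = [:1, -1:]"
  define h0 where "h0 = (\<Sum>F\<in>?I. monom 1 (card F) * q ^ (?a - card F))"
  have finI: "finite ?I" using fin by (rule indep_finite)
  have finF: "F \<in> ?I \<Longrightarrow> finite F" for F
    using fin by (auto simp: independent_def intro: finite_subset)
  have le: "F \<in> ?I \<Longrightarrow> card F \<le> ?a" for F
    unfolding indep_number_def using finI by (intro Max_ge) auto
  have fq: "fps_of_poly q = 1 - fps_X"
  proof -
    have "q = 1 - [:0,1:]" by (simp add: q_def one_pCons)
    thus ?thesis by (simp add: fps_of_poly_diff)
  qed
  have fh0: "fps_of_poly h0 = hilbert_series V E * (1 - fps_X) ^ ?a"
  proof -
    have "hilbert_series V E * (1 - fps_X) ^ ?a = (\<Sum>F\<in>?I. gMS F * (1 - fps_X) ^ ?a)"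
      by (simp add: hs_decomp[OF fin] sum_distrib_right)
    also have "\<dots> = (\<Sum>F\<in>?I. fps_X ^ card F * (1 - fps_X) ^ (?a - card F))"
    proof (rule sum.cong)
      fix F assume F: "F \<in> ?I"
      have "gMS F * (1 - fps_X) ^ ?a = gMS F * (1 - fps_X) ^ card F * (1 - fps_X) ^ (?a - card F)"
        using le[OF F] by (simp add: mult.assoc power_add[symmetric])
      thus "gMS F * (1 - fps_X) ^ ?a = fps_X ^ card F * (1 - fps_X) ^ (?a - card F)"
        using gMS_eq[OF finF[OF F]] by simp
    qed simp
    also have "\<dots> = fps_of_poly h0"
      by (simp add: h0_def fps_of_poly_sum fps_of_poly_mult fps_of_poly_power fps_of_poly_monom' fq)
    finally show ?thesis by simp
  qed
  have dq: "degree q = 1" by (simp add: q_def)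
  have deg: "degree h0 \<le> ?a"
    unfolding h0_def
  proof (rule degree_sum_le[OF finI])
    fix F assume F: "F \<in> ?I"
    have "degree (monom (1::int) (card F) * q ^ (?a - card F)) \<le> card F + (?a - card F)"
      using degree_mult_le[of "monom (1::int) (card F)" "q ^ (?a - card F)"]
        degree_monom_le[of "1::int" "card F"] degree_power_le[of q "?a - card F"] dq
      by simp
    thus "degree (monom (1::int) (card F) * q ^ (?a - card F)) \<le> ?a" using le[OF F] by simp
  qed
  have cq: "coeff (q ^ j) j = (-1) ^ j" for j
  proof -
    have "q \<noteq> 0" by (simp add: q_def)
    hence "degree (q ^ j) = j" using degree_power_eq[of q j] dq by simp
    hence "coeff (q ^ j) j = lead_coeff (q ^ j)" by simp
    also have "\<dots> = (-1) ^ j" by (simp add: lead_coeff_power q_def)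
    finally show ?thesis .
  qed
  have coef: "coeff h0 ?a = (\<Sum>F\<in>?I. (-1::int) ^ (?a - card F))"
    unfolding h0_def coeff_sum
  proof (rule sum.cong)
    fix F assume F: "F \<in> ?I"
    show "coeff (monom 1 (card F) * q ^ (?a - card F)) ?a = (-1) ^ (?a - card F)"
      using le[OF F] by (simp add: coeff_monom_mult cq)
  qed simp
  show ?thesis
  proof
    assume "pseudo_gorenstein_star V E"
    then obtain h where h: "fps_of_poly h = hilbert_series V E * (1 - fps_X) ^ ?a"
      "lead_coeff h = 1" "int (degree h) - int ?a = 0"
      unfolding pseudo_gorenstein_star_def by blast
    have "h = h0" using h(1) fh0 fps_of_poly_eq_iff by metis
    hence "coeff h0 ?a = 1" using h(2,3) by simp
    thus "(\<Sum>F\<in>?I. (-1::int) ^ (?a - card F)) = 1" using coef by simp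
  next
    assume s: "(\<Sum>F\<in>?I. (-1::int) ^ (?a - card F)) = 1"
    hence c1: "coeff h0 ?a = 1" using coef by simp
    hence "?a \<le> degree h0" by (intro le_degree) simp
    hence dg: "degree h0 = ?a" using deg by simp
    have "h0 \<noteq> 0" using c1 by auto
    thus "pseudo_gorenstein_star V E"
      unfolding pseudo_gorenstein_star_def using fh0 dg c1 by (intro exI[of _ h0]) simp
  qed
qed

definition T :: "nat \<Rightarrow> nat \<Rightarrow> nat set set" where
  "T a k = {F. F \<subseteq> {a..<a+k} \<and> (\<forall>i\<in>F. Suc i \<notin> F)}"

definition Sg :: "nat set set \<Rightarrow> int" where
  "Sg X = (\<Sum>F\<in>X. (-1::int) ^ card F)"

fun pv :: "nat \<Rightarrow> int" where
  "pv 0 = 1" | "pv (Suc 0) = 0" | "pv (Suc (Suc k)) = pv (Suc k) - pv k"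

lemma T_finite: "finite (T a k)"
  by (rule finite_subset[of _ "Pow {a..<a+k}"]) (auto simp: T_def)

lemma T_elem_finite: "F \<in> T a k \<Longrightarrow> finite F"
  by (auto simp: T_def intro: finite_subset)

lemma T0: "T a 0 = {{}}" by (auto simp: T_def)
lemma T1: "T a (Suc 0) = {{}, {a}}" by (auto simp: T_def)

lemma T_rec: "T a (Suc (Suc k)) = T a (Suc k) \<union> insert (Suc (a+k)) ` T a k"
proof (intro equalityI subsetI)
  fix F assume F: "F \<in> T a (Suc (Suc k))"
  show "F \<in> T a (Suc k) \<union> insert (Suc (a+k)) ` T a k"
  proof (cases "Suc (a+k) \<in> F")
    case False
    have "F \<subseteq> {a..<a + Suc k}"
    proof
      fix x assume "x \<in> F"
      hence "a \<le> x" "x < Suc (Suc (a+k))" "x \<noteq> Suc (a+k)" using F False by (auto simp: T_def)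
      thus "x \<in> {a..<a + Suc k}" by auto
    qed
    hence "F \<in> T a (Suc k)" using F by (auto simp: T_def)
    thus ?thesis by blast
  next
    case True
    hence "a + k \<notin> F" using F by (auto simp: T_def)
    have "F - {Suc (a+k)} \<subseteq> {a..<a + k}"
    proof
      fix x assume x: "x \<in> F - {Suc (a+k)}"
      hence "a \<le> x" "x < Suc (Suc (a+k))" "x \<noteq> Suc (a+k)" "x \<noteq> a + k"
        using F \<open>a + k \<notin> F\<close> by (auto simp: T_def)
      thus "x \<in> {a..<a + k}" by auto
    qed
    hence "F - {Suc (a+k)} \<in> T a k" using F by (auto simp: T_def)
    moreover have "F = insert (Suc (a+k)) (F - {Suc (a+k)})" using True by blast
    ultimately show ?thesis by blast
  qed
next
  fix F assume "F \<in> T a (Suc k) \<union> insert (Suc (a+k)) ` T a k"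
  thus "F \<in> T a (Suc (Suc k))" by (auto simp: T_def)
qed

lemma Sg_insert_image:
  assumes "\<forall>F\<in>X. x \<notin> F \<and> finite F"
  shows "Sg (insert x ` X) = - Sg X"
proof -
  have inj: "inj_on (insert x) X"
    using assms by (auto simp: inj_on_def)
  have "Sg (insert x ` X) = (\<Sum>F\<in>X. (-1::int) ^ card (insert x F))"
    unfolding Sg_def by (simp add: sum.reindex[OF inj])
  also have "\<dots> = (\<Sum>F\<in>X. - ((-1::int) ^ card F))"
    using assms by (intro sum.cong) auto
  finally show ?thesis by (simp add: Sg_def sum_negf)
qed

lemma Sg_T: "Sg (T a k) = pv k"
proof (induction k rule: pv.induct)
  case 1 thus ?case by (simp add: T0 Sg_def)
next
  case 2 thus ?case by (simp add: T1 Sg_def)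
next
  case (3 k)
  have dis: "T a (Suc k) \<inter> insert (Suc (a+k)) ` T a k = {}" by (auto simp: T_def)
  have "Sg (T a (Suc (Suc k))) = Sg (T a (Suc k)) + Sg (insert (Suc (a+k)) ` T a k)"
    unfolding T_rec Sg_def using dis T_finite by (intro sum.union_disjoint) auto
  also have "Sg (insert (Suc (a+k)) ` T a k) = - Sg (T a k)"
    by (rule Sg_insert_image) (auto simp: T_def intro: finite_subset)
  finally show ?case using 3 by simp
qed

lemma T_card_le: "F \<in> T a k \<Longrightarrow> card F \<le> (k+1) div 2"
proof (induction k arbitrary: F rule: pv.induct)
  case 1 thus ?case by (simp add: T0)
next
  case 2 thus ?case by (auto simp: T1)
next
  case (3 k)
  from "3.prems" consider "F \<in> T a (Suc k)" | G where "G \<in> T a k" "F = insert (Suc (a+k)) G"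
    unfolding T_rec by blast
  thus ?case
  proof cases
    case 1 thus ?thesis using "3.IH"(1)[of F] by simp
  next
    case 2
    have "card F \<le> card G + 1" using 2 T_elem_finite[of G] by (simp add: card_insert_if)
    thus ?thesis using "3.IH"(2)[OF 2(1)] by simp
  qed
qed

lemma T_card_wit: "\<exists>F\<in>T a k. card F = (k+1) div 2"
proof (induction k rule: pv.induct)
  case 1 thus ?case by (simp add: T0)
next
  case 2 thus ?case by (auto simp: T1)
next
  case (3 k)
  then obtain G where G: "G \<in> T a k" "card G = (k+1) div 2" by blast
  have nin: "Suc (a+k) \<notin> G" using G by (auto simp: T_def)
  have "insert (Suc (a+k)) G \<in> T a (Suc (Suc k))" unfolding T_rec using G by blast
  moreover have "card (insert (Suc (a+k)) G) = (Suc (Suc k) + 1) div 2"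
    using G nin T_elem_finite[of G] by simp
  ultimately show ?case by blast
qed

lemma pv_period: "pv (k + 6) = pv k"
proof -
  have a: "pv (Suc (Suc m)) = pv (Suc m) - pv m" for m by simp
  have "k + 6 = Suc (Suc (Suc (Suc (Suc (Suc k)))))" by simp
  moreover have "pv (Suc (Suc (Suc (Suc (Suc (Suc k)))))) = pv k"
    using a[of k] a[of "Suc k"] a[of "Suc (Suc k)"] a[of "Suc (Suc (Suc k))"]
      a[of "Suc (Suc (Suc (Suc k)))"] by linarith
  ultimately show ?thesis by (simp only:)
qed

lemma pv_mod: "pv k = pv (k mod 6)"
proof (induction k rule: less_induct)
  case (less k)
  show ?case
  proof (cases "k < 6")
    case True thus ?thesis by simp
  next
    case False
    then obtain j where j: "k = j + 6" by (metis add.commute le_Suc_ex not_less)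
    hence "pv k = pv j" by (simp add: pv_period)
    also have "\<dots> = pv (j mod 6)" using less.IH[of j] j by simp
    finally show ?thesis using j by simp
  qed
qed

lemma pv_vals: "pv 0 = 1" "pv 1 = 0" "pv 2 = -1" "pv 3 = -1" "pv 4 = 0" "pv 5 = 1"
proof -
  have "pv (Suc (Suc 0)) = -1" "pv (Suc (Suc (Suc 0))) = -1" "pv (Suc (Suc (Suc (Suc 0)))) = 0"
    "pv (Suc (Suc (Suc (Suc (Suc 0))))) = 1" by simp_all
  moreover have "(2::nat) = Suc (Suc 0)" "(3::nat) = Suc (Suc (Suc 0))" "(4::nat) = Suc (Suc (Suc (Suc 0)))"
    "(5::nat) = Suc (Suc (Suc (Suc (Suc 0))))" by simp_all
  ultimately show "pv 0 = 1" "pv 1 = 0" "pv 2 = -1" "pv 3 = -1" "pv 4 = 0" "pv 5 = 1"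
    by (simp_all only:) simp_all
qed

lemma div2_lem: "(a + 2 * b) div 2 = a div 2 + (b::nat)" by simp

lemma divA: "(n+1) div 2 = 6 * (n div 12) + (n mod 12 + 1) div (2::nat)"
proof -
  have n: "n = (n mod 12) + 2 * (6 * (n div 12))" by simp
  have "(n+1) div 2 = ((n mod 12 + 1) + 2 * (6 * (n div 12))) div 2" by (subst n) simp
  also have "\<dots> = (n mod 12 + 1) div 2 + 6 * (n div 12)" by (rule div2_lem)
  finally show ?thesis by simp
qed

lemma divB: "n div 2 = 6 * (n div 12) + (n mod 12) div (2::nat)"
proof -
  have n: "n = (n mod 12) + 2 * (6 * (n div 12))" by simp
  have "n div 2 = ((n mod 12) + 2 * (6 * (n div 12))) div 2" by (subst n) simp
  also have "\<dots> = (n mod 12) div 2 + 6 * (n div 12)" by (rule div2_lem)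
  finally show ?thesis by simp
qed

lemma modB: "n mod 6 = (n mod 12) mod (6::nat)"
  by (simp add: mod_mod_cancel)

lemma modC: "(n + k) mod 6 = (n mod 12 + k) mod (6::nat)"
  by (metis modB mod_add_left_eq)

lemma modD: "k \<le> 6 \<Longrightarrow> k \<le> n \<Longrightarrow> (n - k) mod 6 = (n + (6 - k)) mod (6::nat)"
proof -
  assume "k \<le> 6" "k \<le> n"
  hence "n + (6 - k) = (n - k) + 6" by simp
  thus ?thesis by simp
qed

lemma path_arith:
  assumes "1 \<le> n"
  shows "(-1::int) ^ ((n+1) div 2) * (pv n - 1) = 1 \<longleftrightarrow> n mod 12 = 1 \<or> n mod 12 = 10"
proof -
  define r where "r = n mod 12"
  have r: "r < 12" by (simp add: r_def)
  have e1: "(n+1) div 2 = 6 * (n div 12) + (r + 1) div 2" unfolding r_def by (rule divA)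
  have e2: "n mod 6 = r mod 6" unfolding r_def by (rule modB)
  have p6: "(-1::int) ^ (6 * m) = 1" for m by (simp add: power_mult)
  have eq: "(-1::int) ^ ((n+1) div 2) * (pv n - 1) = (-1) ^ ((r + 1) div 2) * (pv (r mod 6) - 1)"
    unfolding e1 power_add p6 using pv_mod[of n] e2 by simp
  have "r = 0 \<or> r = 1 \<or> r = 2 \<or> r = 3 \<or> r = 4 \<or> r = 5 \<or> r = 6 \<or> r = 7 \<or> r = 8 \<or> r = 9 \<or> r = 10 \<or> r = 11"
    using r by presburger
  thus ?thesis unfolding eq r_def[symmetric]
    by (elim disjE) (simp_all add: pv_vals)
qed

lemma cycle_arith:
  assumes "3 \<le> n"
  shows "(-1::int) ^ (n div 2) * (pv (n-1) - pv (n-3) - 1) = 1 \<longleftrightarrow> n mod 12 = 0"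
proof -
  define r where "r = n mod 12"
  have r: "r < 12" by (simp add: r_def)
  have e1: "n div 2 = 6 * (n div 12) + r div 2" unfolding r_def by (rule divB)
  have e2: "(n-1) mod 6 = (r + 5) mod 6" unfolding r_def using assms modD[of 1 n] modC[of n 5] by simp
  have e3: "(n-3) mod 6 = (r + 3) mod 6" unfolding r_def using assms modD[of 3 n] modC[of n 3] by simp
  have p6: "(-1::int) ^ (6 * m) = 1" for m by (simp add: power_mult)
  have eq: "(-1::int) ^ (n div 2) * (pv (n-1) - pv (n-3) - 1)
      = (-1) ^ (r div 2) * (pv ((r + 5) mod 6) - pv ((r + 3) mod 6) - 1)"
    unfolding e1 power_add p6 using pv_mod[of "n-1"] pv_mod[of "n-3"] e2 e3 by simp
  have "r = 0 \<or> r = 1 \<or> r = 2 \<or> r = 3 \<or> r = 4 \<or> r = 5 \<or> r = 6 \<or> r = 7 \<or> r = 8 \<or> r = 9 \<or> r = 10 \<or> r = 11"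
    using r by presburger
  thus ?thesis unfolding eq r_def[symmetric]
    by (elim disjE) (simp_all add: pv_vals)
qed

lemma path_indep: "independent {0..<n} (path_edges n) F \<longleftrightarrow> F \<in> T 0 n"
proof
  assume A: "independent {0..<n} (path_edges n) F"
  have sub: "F \<subseteq> {0..<n}" using A by (simp add: independent_def)
  have "\<forall>i\<in>F. Suc i \<notin> F"
  proof (intro ballI notI)
    fix i assume "i \<in> F" "Suc i \<in> F"
    hence "Suc i < n" "{i, Suc i} \<subseteq> F" using sub by auto
    moreover have "{i, Suc i} \<in> path_edges n" if "Suc i < n" using that by (auto simp: path_edges_def)
    ultimately show False using A by (auto simp: independent_def)
  qed
  thus "F \<in> T 0 n" using sub by (simp add: T_def)
next
  assume B: "F \<in> T 0 n"
  have sub: "F \<subseteq> {0..<n}" and nadj: "\<forall>i\<in>F. Suc i \<notin> F" using B by (auto simp: T_def)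
  have "\<not> e \<subseteq> F" if e: "e \<in> path_edges n" for e
  proof -
    obtain i where "e = {i, Suc i}" using e unfolding path_edges_def by blast
    thus ?thesis using nadj by auto
  qed
  thus "independent {0..<n} (path_edges n) F" using sub by (auto simp: independent_def)
qed

definition Cy :: "nat \<Rightarrow> nat set set" where
  "Cy n = T 0 (n-1) \<union> insert (n-1) ` T (Suc 0) (n-3)"

lemma cycle_indep_P:
  assumes n: "3 \<le> n"
  shows "independent {0..<n} (cycle_edges n) F \<longleftrightarrow>
     F \<subseteq> {0..<n} \<and> (\<forall>i\<in>F. Suc i \<notin> F) \<and> \<not> (n - 1 \<in> F \<and> 0 \<in> F)"
proof
  assume A: "independent {0..<n} (cycle_edges n) F"
  have sub: "F \<subseteq> {0..<n}" using A by (simp add: independent_def)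
  have noE: "\<And>i. i < n \<Longrightarrow> \<not> {i, (i+1) mod n} \<subseteq> F"
    using A by (auto simp: independent_def cycle_edges_def)
  have "\<forall>i\<in>F. Suc i \<notin> F"
  proof (intro ballI notI)
    fix i assume "i \<in> F" "Suc i \<in> F"
    hence "Suc i < n" using sub by auto
    hence "(i+1) mod n = Suc i" by simp
    thus False using noE[of i] \<open>Suc i < n\<close> \<open>i \<in> F\<close> \<open>Suc i \<in> F\<close> by auto
  qed
  moreover have "\<not> (n - 1 \<in> F \<and> 0 \<in> F)"
  proof
    assume "n - 1 \<in> F \<and> 0 \<in> F"
    moreover have "(n - 1 + 1) mod n = 0" using n by simp
    ultimately show False using noE[of "n-1"] n by auto
  qed
  ultimately show "F \<subseteq> {0..<n} \<and> (\<forall>i\<in>F. Suc i \<notin> F) \<and> \<not> (n - 1 \<in> F \<and> 0 \<in> F)"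
    using sub by blast
next
  assume B: "F \<subseteq> {0..<n} \<and> (\<forall>i\<in>F. Suc i \<notin> F) \<and> \<not> (n - 1 \<in> F \<and> 0 \<in> F)"
  have "\<not> e \<subseteq> F" if e: "e \<in> cycle_edges n" for e
  proof -
    obtain i where i: "e = {i, (i+1) mod n}" "i < n" using e unfolding cycle_edges_def by blast
    show ?thesis
    proof (cases "Suc i < n")
      case True
      hence "e = {i, Suc i}" using i by simp
      thus ?thesis using B by auto
    next
      case False
      hence "i = n - 1" using i by simp
      moreover have "(n - 1 + 1) mod n = 0" using n by simp
      ultimately have "e = {n-1, 0}" using i by simp
      thus ?thesis using B by auto
    qed
  qed
  thus "independent {0..<n} (cycle_edges n) F" using B by (auto simp: independent_def)
qed

lemma cycle_indep:
  assumes n: "3 \<le> n"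
  shows "independent {0..<n} (cycle_edges n) F \<longleftrightarrow> F \<in> Cy n"
proof -
  have "(F \<subseteq> {0..<n} \<and> (\<forall>i\<in>F. Suc i \<notin> F) \<and> \<not> (n - 1 \<in> F \<and> 0 \<in> F)) \<longleftrightarrow> F \<in> Cy n"
  proof
    assume B: "F \<subseteq> {0..<n} \<and> (\<forall>i\<in>F. Suc i \<notin> F) \<and> \<not> (n - 1 \<in> F \<and> 0 \<in> F)"
    show "F \<in> Cy n"
    proof (cases "n - 1 \<in> F")
      case False
      have "F \<subseteq> {0..<0 + (n-1)}"
      proof
        fix x assume "x \<in> F"
        hence "x < n" "x \<noteq> n - 1" using B False by auto
        thus "x \<in> {0..<0 + (n-1)}" by auto
      qed
      hence "F \<in> T 0 (n-1)" using B by (simp add: T_def)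
      thus ?thesis by (simp add: Cy_def)
    next
      case True
      have z: "0 \<notin> F" using B True by blast
      have sn: "Suc (n - 2) = n - 1" using n by simp
      have m2: "n - 2 \<notin> F"
      proof
        assume "n - 2 \<in> F"
        hence "Suc (n - 2) \<notin> F" using B by blast
        thus False using True sn by simp
      qed
      have "F - {n-1} \<subseteq> {Suc 0..<Suc 0 + (n-3)}"
      proof
        fix x assume x: "x \<in> F - {n-1}"
        have "x < n" using B x by auto
        moreover have "x \<noteq> n - 1" using x by simp
        moreover have "x \<noteq> 0" proof assume "x = 0" thus False using z x by simp qed
        moreover have "x \<noteq> n - 2" proof assume "x = n - 2" thus False using m2 x by simp qed
        ultimately have "x < n" "x \<noteq> n - 1" "x \<noteq> 0" "x \<noteq> n - 2" by blast+
        thus "x \<in> {Suc 0..<Suc 0 + (n-3)}" using n by auto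
      qed
      hence "F - {n-1} \<in> T (Suc 0) (n-3)" using B by (auto simp: T_def)
      moreover have "F = insert (n-1) (F - {n-1})" using True by blast
      ultimately show ?thesis unfolding Cy_def by blast
    qed
  next
    assume "F \<in> Cy n"
    then consider "F \<in> T 0 (n-1)" | G where "G \<in> T (Suc 0) (n-3)" "F = insert (n-1) G"
      unfolding Cy_def by blast
    thus "F \<subseteq> {0..<n} \<and> (\<forall>i\<in>F. Suc i \<notin> F) \<and> \<not> (n - 1 \<in> F \<and> 0 \<in> F)"
    proof cases
      case 1 thus ?thesis by (auto simp: T_def)
    next
      case 2
      have GT: "G \<subseteq> {Suc 0..<Suc 0 + (n-3)}" "\<forall>i\<in>G. Suc i \<notin> G" using 2(1) by (simp_all add: T_def)
      have "Suc 0 + (n-3) = n - 2" using n by simp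
      hence G: "G \<subseteq> {Suc 0..<n-2}" "\<forall>i\<in>G. Suc i \<notin> G" using GT by simp_all
      have "F \<subseteq> {0..<n}" using G(1) 2(2) n by (auto simp: subset_iff)
      moreover have "\<forall>i\<in>F. Suc i \<notin> F"
      proof (intro ballI notI)
        fix i assume i: "i \<in> F" "Suc i \<in> F"
        show False
        proof (cases "i = n - 1")
          case True thus False using i G(1) 2(2) n by (auto simp: subset_iff)
        next
          case False
          hence iG: "i \<in> G" using i 2(2) by auto
          show False
          proof (cases "Suc i = n - 1")
            case True thus False using iG G(1) by (auto simp: subset_iff)
          next
            case False thus False using iG i 2(2) G(2) by auto
          qed
        qed
      qed
      moreover have "0 \<notin> F" using G(1) 2(2) n by (auto simp: subset_iff)
      ultimately show ?thesis by blast
    qed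
  qed
  thus ?thesis using cycle_indep_P[OF n] by simp
qed

lemma Cy_finite: "finite (Cy n)" by (simp add: Cy_def T_finite)

lemma Sg_Cy:
  assumes "3 \<le> n" shows "Sg (Cy n) = pv (n-1) - pv (n-3)"
proof -
  have dis: "T 0 (n-1) \<inter> insert (n-1) ` T (Suc 0) (n-3) = {}" by (auto simp: T_def)
  have "Sg (Cy n) = Sg (T 0 (n-1)) + Sg (insert (n-1) ` T (Suc 0) (n-3))"
    unfolding Cy_def Sg_def using dis T_finite by (intro sum.union_disjoint) auto
  also have "Sg (insert (n-1) ` T (Suc 0) (n-3)) = - Sg (T (Suc 0) (n-3))"
  proof (rule Sg_insert_image, intro ballI conjI)
    fix G assume G: "G \<in> T (Suc 0) (n-3)"
    show "finite G" using G by (rule T_elem_finite)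
    show "n - 1 \<notin> G"
    proof
      assume "n - 1 \<in> G"
      hence "n - 1 < Suc 0 + (n-3)" using G by (auto simp: T_def)
      thus False using assms by simp
    qed
  qed
  finally show ?thesis by (simp add: Sg_T)
qed

lemma Cy_card_le:
  assumes "3 \<le> n" "F \<in> Cy n" shows "card F \<le> n div 2"
proof -
  from assms(2) consider "F \<in> T 0 (n-1)" | G where "G \<in> T (Suc 0) (n-3)" "F = insert (n-1) G"
    unfolding Cy_def by blast
  thus ?thesis
  proof cases
    case 1 thus ?thesis using T_card_le[of F 0 "n-1"] assms(1) by simp
  next
    case 2
    have "card F \<le> card G + 1" using 2 T_elem_finite[of G] by (simp add: card_insert_if)
    thus ?thesis using T_card_le[OF 2(1)] assms(1) by linarith
  qed
qed

lemma Cy_card_wit: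
  assumes "3 \<le> n" shows "\<exists>F\<in>Cy n. card F = n div 2"
  using T_card_wit[of 0 "n-1"] assms by (auto simp: Cy_def)

lemma neg1_pow_diff:
  assumes "c \<le> (a::nat)" shows "(-1::int) ^ (a - c) = (-1) ^ a * (-1) ^ c"
proof -
  obtain d where a: "a = c + d" using assms le_Suc_ex by blast
  have cc: "(-1::int) ^ c * (-1) ^ c = 1" by (simp add: power_add[symmetric])
  have "(-1::int) ^ a * (-1) ^ c = ((-1) ^ c * (-1) ^ c) * (-1) ^ d"
    unfolding a power_add by (simp add: mult_ac)
  thus ?thesis using a cc by simp
qed

lemma cone_indep:
  fixes n :: nat
  assumes E: "\<forall>e\<in>E. e \<subseteq> {0..<n} \<and> e \<noteq> {}"
  shows "{F. independent (insert n {0..<n}) (cone_edges {0..<n} E n) F}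
       = {F. independent {0..<n} E F} \<union> {{n}}"
proof (intro equalityI subsetI)
  fix F assume "F \<in> {F. independent (insert n {0..<n}) (cone_edges {0..<n} E n) F}"
  hence A: "F \<subseteq> insert n {0..<n}" "\<forall>e\<in>cone_edges {0..<n} E n. \<not> e \<subseteq> F"
    by (simp_all add: independent_def)
  show "F \<in> {F. independent {0..<n} E F} \<union> {{n}}"
  proof (cases "n \<in> F")
    case True
    have "F = {n}"
    proof (rule ccontr)
      assume "F \<noteq> {n}"
      then obtain u where u: "u \<in> F" "u \<noteq> n" using True by blast
      hence "u < n" using A(1) by (auto simp: subset_iff)
      hence "{u, n} \<in> cone_edges {0..<n} E n" unfolding cone_edges_def
        by (intro UnI2 CollectI exI[of _ u]) simp
      moreover have "{u, n} \<subseteq> F" using u True by blast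
      ultimately show False using A(2) by blast
    qed
    thus ?thesis by simp
  next
    case False
    have "F \<subseteq> {0..<n}"
    proof
      fix x assume "x \<in> F"
      hence "x \<in> insert n {0..<n}" "x \<noteq> n" using A(1) False by blast+
      thus "x \<in> {0..<n}" by blast
    qed
    moreover have "E \<subseteq> cone_edges {0..<n} E n" unfolding cone_edges_def by (rule Un_upper1)
    hence "\<forall>e\<in>E. \<not> e \<subseteq> F" using A(2) by blast
    ultimately show ?thesis by (simp add: independent_def)
  qed
next
  fix F assume "F \<in> {F. independent {0..<n} E F} \<union> {{n}}"
  thus "F \<in> {F. independent (insert n {0..<n}) (cone_edges {0..<n} E n) F}"
  proof
    assume "F \<in> {F. independent {0..<n} E F}"
    hence B: "F \<subseteq> {0..<n}" "\<forall>e\<in>E. \<not> e \<subseteq> F" by (simp_all add: independent_def)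
    have nF: "n \<notin> F" using B(1) by (auto simp: subset_iff)
    have "\<not> e \<subseteq> F" if e: "e \<in> cone_edges {0..<n} E n" for e
    proof -
      have "e \<in> E \<or> (\<exists>u. e = {u, n} \<and> u \<in> {0..<n})" using e
        unfolding cone_edges_def by (simp only: Un_iff mem_Collect_eq)
      then consider "e \<in> E" | u where "e = {u, n}" by metis
      thus ?thesis
      proof cases
        case 1 thus ?thesis using B(2) by blast
      next
        case 2 thus ?thesis using nF by blast
      qed
    qed
    moreover have "F \<subseteq> insert n {0..<n}" using B(1) by blast
    ultimately show ?thesis by (simp add: independent_def)
  next
    assume F: "F \<in> {{n}}"
    have "\<not> e \<subseteq> {n}" if e: "e \<in> cone_edges {0..<n} E n" for e
    proof -
      have "e \<in> E \<or> (\<exists>u. e = {u, n} \<and> u \<in> {0..<n})" using e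
        unfolding cone_edges_def by (simp only: Un_iff mem_Collect_eq)
      then consider "e \<in> E" | u where "u \<in> {0..<n}" "e = {u, n}" by metis
      thus ?thesis
      proof cases
        case 1
        hence e1: "e \<subseteq> {0..<n}" "e \<noteq> {}" using E by blast+
        show ?thesis
        proof
          assume "e \<subseteq> {n}"
          then obtain x where "x \<in> e" "x = n" using e1(2) by blast
          thus False using e1(1) by (auto simp: subset_iff)
        qed
      next
        case 2
        hence "u \<noteq> n" by simp
        thus ?thesis using 2 by blast
      qed
    qed
    moreover have "{n} \<subseteq> insert n {0..<n}" by blast
    ultimately show ?thesis using F by (simp add: independent_def)
  qed
qed

lemma cone_pg:
  fixes n :: nat
  assumes E: "\<forall>e\<in>E. e \<subseteq> {0..<n} \<and> e \<noteq> {}"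
    and fam: "{F. independent {0..<n} E F} = X"
    and bound: "\<forall>F\<in>X. card F \<le> a" and wit: "\<exists>F\<in>X. card F = a" and a1: "1 \<le> a"
  shows "pseudo_gorenstein_star (insert n {0..<n}) (cone_edges {0..<n} E n)
     \<longleftrightarrow> (-1::int) ^ a * (Sg X - 1) = 1"
proof -
  let ?V = "insert n {0..<n}" and ?E = "cone_edges {0..<n} E n"
  have I: "{F. independent ?V ?E F} = X \<union> {{n}}" using cone_indep[OF E] fam by simp
  have finX: "finite X" using indep_finite[of "{0..<n}" E] fam by simp
  have nX: "{n} \<notin> X" using fam by (auto simp: independent_def)
  have alpha: "indep_number ?V ?E = a"
    unfolding indep_number_def I
  proof (rule Max_eqI)
    show "finite (card ` (X \<union> {{n}}))" using finX by simp
    show "y \<le> a" if "y \<in> card ` (X \<union> {{n}})" for y using that bound a1 by auto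
    show "a \<in> card ` (X \<union> {{n}})" using wit by force
  qed
  have "(\<Sum>F\<in>X \<union> {{n}}. (-1::int) ^ (a - card F)) = (\<Sum>F\<in>X. (-1::int) ^ (a - card F)) + (-1) ^ (a - 1)"
    using finX nX by simp
  also have "(\<Sum>F\<in>X. (-1::int) ^ (a - card F)) = (\<Sum>F\<in>X. (-1) ^ a * (-1) ^ card F)"
    using bound by (intro sum.cong) (auto simp: neg1_pow_diff)
  also have "(-1::int) ^ (a - 1) = - ((-1) ^ a)"
    using a1 neg1_pow_diff[of 1 a] by simp
  finally have "(\<Sum>F\<in>X \<union> {{n}}. (-1::int) ^ (a - card F)) = (-1) ^ a * (Sg X - 1)"
    by (simp add: Sg_def sum_distrib_left algebra_simps)
  thus ?thesis using pg_iff[of ?V ?E] I alpha by simp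
qed

theorem theorem5p5:
  shows "(\<forall>n::nat. n \<ge> 3 \<longrightarrow>
            (pseudo_gorenstein_star (insert n {0..<n}) (cone_edges {0..<n} (cycle_edges n) n)
             \<longleftrightarrow> n mod 12 = 0))
       \<and> (\<forall>n::nat. n \<ge> 1 \<longrightarrow>
            (pseudo_gorenstein_star (insert n {0..<n}) (cone_edges {0..<n} (path_edges n) n)
             \<longleftrightarrow> n mod 12 = 1 \<or> n mod 12 = 10))"
proof (intro conjI allI impI)
  fix n :: nat assume n: "3 \<le> n"
  have E: "\<forall>e\<in>cycle_edges n. e \<subseteq> {0..<n} \<and> e \<noteq> {}" using n by (auto simp: cycle_edges_def)
  have fam: "{F. independent {0..<n} (cycle_edges n) F} = Cy n" using cycle_indep[OF n] by auto
  have "pseudo_gorenstein_star (insert n {0..<n}) (cone_edges {0..<n} (cycle_edges n) n)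
      \<longleftrightarrow> (-1::int) ^ (n div 2) * (Sg (Cy n) - 1) = 1"
    by (rule cone_pg[OF E fam]) (use n Cy_card_le Cy_card_wit in auto)
  thus "pseudo_gorenstein_star (insert n {0..<n}) (cone_edges {0..<n} (cycle_edges n) n)
      \<longleftrightarrow> n mod 12 = 0" using Sg_Cy[OF n] cycle_arith[OF n] by simp
next
  fix n :: nat assume n: "1 \<le> n"
  have E: "\<forall>e\<in>path_edges n. e \<subseteq> {0..<n} \<and> e \<noteq> {}" by (auto simp: path_edges_def)
  have fam: "{F. independent {0..<n} (path_edges n) F} = T 0 n" using path_indep by auto
  have "pseudo_gorenstein_star (insert n {0..<n}) (cone_edges {0..<n} (path_edges n) n)
      \<longleftrightarrow> (-1::int) ^ ((n+1) div 2) * (Sg (T 0 n) - 1) = 1"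
    by (rule cone_pg[OF E fam]) (use n T_card_le T_card_wit in auto)
  thus "pseudo_gorenstein_star (insert n {0..<n}) (cone_edges {0..<n} (path_edges n) n)
      \<longleftrightarrow> n mod 12 = 1 \<or> n mod 12 = 10" using Sg_T path_arith[OF n] by simp
qed

end
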